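(* Let $a_n$ denote the size of the smallest string attractor of the length-$n$ prefix $\mathbf{t}[0..n-1]$ of the Thue–Morse word $\mathbf{t}$. Then $$a_n=\begin{cases}1,& n=1;\\ 2,& 2\le n\le 6;\\ 3,& 7\le n\le 14 \text{ or } 17\le n\le 24;\\ 4,& n\in\{15,16\}\text{ or } n\ge 25.\end{cases}$$
   Context: The Thue–Morse word $\mathbf{t}=0110100110010110\cdots$ is the infinite fixed point, starting with $0$, of the morphism $\mu$ with $0\mapsto 01$, $1\mapsto 10$; it is indexed starting at $0$. A string attractor of a finite word $w=w[0..n-1]$ is a set $S\subseteq\{0,\ldots,n-1\}$ such that every nonempty factor $f$ of $w$ has an occurrence $w[p..q]=f$ with $p\le i\le q$ for some $i\in S$. *)

theory Defs
  imports Main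
begin

fun tm_letter :: "nat \<Rightarrow> nat list" where
  "tm_letter a = (if a = 0 then [0, 1] else [1, 0])"

definition tm_mu :: "nat list \<Rightarrow> nat list" where
  "tm_mu w = concat (map tm_letter w)"

text \<open>The Thue--Morse word, indexed from 0: the n-th letter of the fixed point of mu
  starting with 0, read off the prefix mu^(n+1)(0), which has length 2^(n+1) > n.\<close>
definition thue_morse :: "nat \<Rightarrow> nat" where
  "thue_morse n = ((tm_mu ^^ Suc n) [0]) ! n"

definition tm_prefix :: "nat \<Rightarrow> nat list" where
  "tm_prefix n = map thue_morse [0..<n]"

definition factor :: "'a list \<Rightarrow> nat \<Rightarrow> nat \<Rightarrow> 'a list" where
  "factor w p q = take (Suc q - p) (drop p w)"

definition string_attractor :: "'a list \<Rightarrow> nat set \<Rightarrow> bool" where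
  "string_attractor w S \<longleftrightarrow> S \<subseteq> {0..<length w} \<and>
     (\<forall>p q. p \<le> q \<and> q < length w \<longrightarrow>
        (\<exists>p' q' i. p' \<le> q' \<and> q' < length w \<and> factor w p' q' = factor w p q \<and>
                   i \<in> S \<and> p' \<le> i \<and> i \<le> q'))"

definition min_attractor_size :: "'a list \<Rightarrow> nat" where
  "min_attractor_size w = (LEAST k. \<exists>S. string_attractor w S \<and> card S = k)"

end

theory Submission
  imports Defs
begin

fun tmf :: "nat \<Rightarrow> nat" where
  "tmf n = (if n = 0 then 0 else if even n then tmf (n div 2) else 1 - tmf (n div 2))"
declare tmf.simps[simp del]

lemma tmf_0[simp]: "tmf 0 = 0"
  by (subst tmf.simps) simp

lemma tmf_numeral: "tmf (numeral k) = (if even (numeral k::nat) then tmf (numeral k div 2) else 1 - tmf (numeral k div 2))"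
  by (subst tmf.simps) simp
lemma tmf_1[simp]: "tmf 1 = 1"
  by (subst tmf.simps) simp

lemma tmf_Suc0[simp]: "tmf (Suc 0) = Suc 0"
  by (subst tmf.simps) simp

lemma tmf_le1: "tmf n \<le> 1"
  by (induction n rule: tmf.induct) (subst tmf.simps, auto)

lemma tmf_even: "tmf (2*i) = tmf i"
  by (subst tmf.simps) auto

lemma tmf_odd: "tmf (Suc (2*i)) = 1 - tmf i"
  by (subst tmf.simps) auto

lemma tm_mu_append: "tm_mu (xs @ ys) = tm_mu xs @ tm_mu ys"
  by (simp add: tm_mu_def)

lemma tm_mu_map: "tm_mu (map tmf [0..<m]) = map tmf [0..<2*m]"
proof (induction m)
  case 0 then show ?case by (simp add: tm_mu_def)
next
  case (Suc m)
  have e: "[0..<2 * Suc m] = [0..<2*m] @ [2*m, Suc (2*m)]" by simp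
  have "tm_letter (tmf m) = [tmf (2*m), tmf (Suc (2*m))]"
    using tmf_le1[of m] by (auto simp: tmf_even tmf_odd)
  then show ?case using Suc by (simp add: tm_mu_append e) (simp add: tm_mu_def)
qed

lemma tm_pow: "(tm_mu ^^ k) [0] = map tmf [0..<2^k]"
proof (induction k)
  case 0 then show ?case by simp
next
  case (Suc k) then show ?case by (simp add: tm_mu_map)
qed

lemma thue_morse_tmf: "thue_morse n = tmf n"
proof -
  have "n < 2 ^ Suc n" by (induction n) auto
  then show ?thesis unfolding thue_morse_def tm_pow by simp
qed

lemma tm_prefix_tmf: "tm_prefix n = map tmf [0..<n]"
  by (simp add: tm_prefix_def thue_morse_tmf)

lemma tmf_cases: "tmf n = 0 \<or> tmf n = 1"
  using tmf_le1[of n] by arith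

lemma tmf_even': "tmf (2*i + 0) = tmf i" by (simp add: tmf_even)
lemma tmf_odd': "tmf (2*i + 1) = 1 - tmf i" using tmf_odd[of i] by simp

lemma tmf_ev2: "x = 2*i \<Longrightarrow> tmf x = tmf i" by (simp add: tmf_even)
lemma tmf_od2: "x = 2*i+1 \<Longrightarrow> tmf x = 1 - tmf i" using tmf_odd' by simp

lemma pair_ne: "tmf (2*c) \<noteq> tmf (2*c+1)"
  using tmf_cases[of c] tmf_ev2[of "2*c" c] tmf_od2[of "2*c+1" c] by auto

lemma no_cube: "\<not> (tmf p = tmf (p+1) \<and> tmf (p+1) = tmf (p+2))"
proof
  assume h: "tmf p = tmf (p+1) \<and> tmf (p+1) = tmf (p+2)"
  obtain c r where p: "p = 2*c + r" and r: "r < 2" by (metis mod_less_divisor mult_div_mod_eq zero_less_numeral add.commute)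
  show False
  proof (cases "r = 0")
    case True
    then show ?thesis using h pair_ne[of c] p by simp
  next
    case False
    then have "r = 1" using r by simp
    then have "p + 1 = 2*(c+1)" "p+2 = 2*(c+1)+1" using p by simp_all
    then show ?thesis using h pair_ne[of "c+1"] by simp
  qed
qed

lemma no_alt5:
  "\<not> (tmf p \<noteq> tmf (p+1) \<and> tmf (p+1) \<noteq> tmf (p+2) \<and> tmf (p+2) \<noteq> tmf (p+3) \<and> tmf (p+3) \<noteq> tmf (p+4))"
proof
  assume h: "tmf p \<noteq> tmf (p+1) \<and> tmf (p+1) \<noteq> tmf (p+2) \<and> tmf (p+2) \<noteq> tmf (p+3) \<and> tmf (p+3) \<noteq> tmf (p+4)"
  have b: "\<And>k. tmf k = 0 \<or> tmf k = 1" by (rule tmf_cases)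
  obtain c r where p: "p = 2*c + r" and r: "r < 2" by (metis mod_less_divisor mult_div_mod_eq zero_less_numeral add.commute)
  show False
  proof (cases "r = 0")
    case True
    have e: "tmf p = tmf c" "tmf (p+2) = tmf (c+1)" "tmf (p+4) = tmf (c+2)"
      by (rule tmf_ev2, simp add: True p)+
    have "tmf p = tmf (p+2)" "tmf (p+2) = tmf (p+4)" using h b[of p] b[of "p+1"] b[of "p+2"] b[of "p+3"] b[of "p+4"] by auto
    then show ?thesis using no_cube[of c] e by (simp add: add.commute)
  next
    case False
    then have r1: "r = 1" using r by simp
    have e: "tmf (2*c) = tmf c" "tmf (p+1) = tmf (c+1)" "tmf (p+3) = tmf (c+2)"
      by (rule tmf_ev2, simp add: r1 p)+
    have "tmf (2*c) \<noteq> tmf p" using pair_ne[of c] r1 p by simp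
    then have "tmf (2*c) = tmf (p+1)" "tmf (p+1) = tmf (p+3)"
      using h b[of p] b[of "p+1"] b[of "p+2"] b[of "p+3"] b[of "2*c"] by auto
    then show ?thesis using no_cube[of c] e by (simp add: add.commute add.left_commute)
  qed
qed

definition eqf :: "nat \<Rightarrow> nat \<Rightarrow> nat \<Rightarrow> bool" where
  "eqf a p l \<longleftrightarrow> (\<forall>j<l. tmf (a+j) = tmf (p+j))"

lemma recog:
  assumes "eqf a (2*b) l" "4 \<le> l"
  shows "even a"
proof (rule ccontr)
  assume "odd a"
  then obtain d where a: "a = 2*d+1" by (metis oddE)
  have e: "\<And>j. j < 4 \<Longrightarrow> tmf (2*d+1+j) = tmf (2*b+j)" using assms a unfolding eqf_def by auto
  have "tmf (2*b) \<noteq> tmf (2*b+1)" by (rule pair_ne)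
  moreover have "tmf (2*(b+1)) \<noteq> tmf (2*(b+1)+1)" by (rule pair_ne)
  moreover have "tmf (2*d) \<noteq> tmf (2*d+1)" by (rule pair_ne)
  moreover have "tmf (2*(d+1)) \<noteq> tmf (2*(d+1)+1)" by (rule pair_ne)
  ultimately have "tmf (2*d) \<noteq> tmf (2*d+1) \<and> tmf (2*d+1) \<noteq> tmf (2*d+2) \<and> tmf (2*d+2) \<noteq> tmf (2*d+3) \<and> tmf (2*d+3) \<noteq> tmf (2*d+4)"
    using e[of 0] e[of 1] e[of 2] e[of 3] by (simp add: algebra_simps numeral_eq_Suc)
  then show False using no_alt5[of "2*d"] by (simp add: algebra_simps)
qed

lemma tmf_dbl: "r < 2 \<Longrightarrow> tmf (2*x + r) = (if r = 0 then tmf x else 1 - tmf x)"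
  using tmf_even'[of x] tmf_odd'[of x] by (cases r) auto

lemma eqf_double:
  assumes "eqf c p m" "s + l \<le> 2*m"
  shows "eqf (2*c+s) (2*p+s) l"
  unfolding eqf_def
proof (intro allI impI)
  fix j assume j: "j < l"
  define k where "k = s + j"
  have k: "k < 2*m" using j assms(2) k_def by simp
  have u: "k div 2 < m" using k by simp
  have "tmf (c + k div 2) = tmf (p + k div 2)" using assms(1) u unfolding eqf_def by blast
  moreover have "2*c+s+j = 2*(c + k div 2) + k mod 2" "2*p+s+j = 2*(p + k div 2) + k mod 2"
    using k_def by simp_all
  ultimately show "tmf (2*c+s+j) = tmf (2*p+s+j)"
    using tmf_dbl[of "k mod 2" "c + k div 2"] tmf_dbl[of "k mod 2" "p + k div 2"] by (simp only:)
qed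

definition Inv :: "nat set \<Rightarrow> nat \<Rightarrow> bool" where
  "Inv S n \<longleftrightarrow> (\<forall>i\<in>S. i + 1 < n) \<and>
     (\<forall>a l. 2 \<le> l \<longrightarrow> a + l \<le> n \<longrightarrow> (\<exists>p i. p + l \<le> n \<and> eqf a p l \<and> i \<in> S \<and> p \<le> i \<and> i + 1 < p + l))"

definition W :: "nat set \<Rightarrow> nat \<Rightarrow> bool" where
  "W S n \<longleftrightarrow> (\<forall>a l. 2 \<le> l \<longrightarrow> a + l \<le> n \<longrightarrow> (\<exists>p i. p + l \<le> n \<and> eqf a p l \<and> i \<in> S \<and> p \<le> i \<and> i < p + l))"

lemma W_half:
  assumes "W S n"
  shows "W ((\<lambda>i. i div 2) ` S) (n div 2)"
  unfolding W_def
proof (intro allI impI)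
  fix c m assume m: "2 \<le> m" and cm: "c + m \<le> n div 2"
  have "2*c + 2*m \<le> n" using cm by linarith
  moreover have "2 \<le> 2*m" using m by simp
  ultimately have "\<exists>p' i'. p' + 2*m \<le> n \<and> eqf (2*c) p' (2*m) \<and> i' \<in> S \<and> p' \<le> i' \<and> i' < p' + 2*m"
    using assms unfolding W_def by blast
  then obtain p' i' where h: "p' + 2*m \<le> n" "eqf (2*c) p' (2*m)" "i' \<in> S" "p' \<le> i'" "i' < p' + 2*m"
    by blast
  have "eqf p' (2*c) (2*m)" using h(2) unfolding eqf_def by simp
  then have "even p'" using recog m by simp
  then obtain p where p: "p' = 2*p" by (metis evenE)
  have "eqf c p m" unfolding eqf_def
  proof (intro allI impI)
    fix j assume "j < m"
    then have "tmf (2*c + 2*j) = tmf (2*p + 2*j)" using h(2) p unfolding eqf_def by auto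
    then show "tmf (c+j) = tmf (p+j)" using tmf_ev2[of "2*c+2*j" "c+j"] tmf_ev2[of "2*p+2*j" "p+j"] by simp
  qed
  moreover have "p + m \<le> n div 2" using h(1) p by linarith
  moreover have "p \<le> i' div 2" "i' div 2 < p + m" using h(4,5) p by linarith+
  ultimately show "\<exists>p i. p + m \<le> n div 2 \<and> eqf c p m \<and> i \<in> (\<lambda>i. i div 2) ` S \<and> p \<le> i \<and> i < p + m"
    using h(3) by blast
qed

lemma Inv_double:
  assumes I1: "Inv S k" and I2: "N = 2*k+1 \<Longrightarrow> Inv S (Suc k)" and k7: "7 \<le> k" and N: "N = 2*k \<or> N = 2*k+1"
  shows "Inv ((\<lambda>i. 2*i+1) ` S) N"
  unfolding Inv_def
proof (intro conjI allI impI ballI)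
  fix i' assume "i' \<in> (\<lambda>i. 2*i+1) ` S"
  then obtain i where "i \<in> S" "i' = 2*i+1" by blast
  then show "i' + 1 < N" using I1 N unfolding Inv_def by fastforce
next
  fix a l assume l2: "2 \<le> l" and al: "a + l \<le> N"
  define c where "c = a div 2"
  define s where "s = a mod 2"
  define b where "b = a + l - 1"
  define d where "d = b div 2"
  have a_eq: "a = 2*c + s" and s2: "s < 2" using c_def s_def by simp_all
  have b_eq: "b = 2*d + b mod 2" using d_def by simp
  show "\<exists>p i. p + l \<le> N \<and> eqf a p l \<and> i \<in> (\<lambda>i. 2*i+1) ` S \<and> p \<le> i \<and> i + 1 < p + l"
  proof (cases "l = 2 \<and> s = 0")
    case True
    define x where "x = tmf c"
    have x01: "x = 0 \<or> x = 1" using tmf_cases x_def by simp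
    have tm1: "tmf 1 = 1" "tmf 2 = 1" "tmf 5 = 0" "tmf 6 = 0" "tmf (Suc (Suc 0)) = 1"
      by (simp_all add: tmf_numeral numeral_2_eq_2[symmetric])
    define a0 where "a0 = (if x = 0 then 1 else (5::nat))"
    have a0: "tmf a0 = 1 - x" "tmf (a0+1) = 1 - x" "a0 + 2 \<le> k"
      using x01 tm1 k7 a0_def by auto
    obtain p i where pi: "p + 2 \<le> k" "eqf a0 p 2" "i \<in> S" "p \<le> i" "i + 1 < p + 2"
      using I1 a0(3) unfolding Inv_def by (metis order_refl)
    have ip: "i = p" using pi by simp
    have ti: "tmf i = 1 - x" "tmf (i+1) = 1 - x" using pi(2) a0 ip unfolding eqf_def
      by (metis add.right_neutral zero_less_numeral, metis one_less_numeral_iff semiring_norm(76))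
    have "tmf (2*i+1) = x" using tmf_od2[of "2*i+1" i] ti x01 by auto
    moreover have "tmf (2*i+2) = 1 - x" using tmf_ev2[of "2*i+2" "i+1"] ti by simp
    moreover have "tmf a = x" using tmf_ev2[of a c] True a_eq x_def by simp
    moreover have "tmf (a+1) = 1 - x" using tmf_od2[of "a+1" c] True a_eq x_def by simp
    ultimately have "eqf a (2*i+1) l" using True unfolding eqf_def
      by (auto simp: less_2_cases_iff)
    moreover have "2*i+1 + l \<le> N" using True pi(1) ip N by auto
    ultimately show ?thesis using True pi(3) by (intro exI[of _ "2*i+1"] exI[of _ "2*i+1"]) auto
  next
    case False
    define m where "m = d - c + 1"
    have bd: "b \<le> 2*k" using al N b_def l2 by auto
    have dk: "d \<le> k" using bd d_def by simp
    have dc: "c + 1 \<le> d" using False l2 a_eq s2 b_def d_def by auto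
    have m2: "2 \<le> m" using dc m_def by simp
    define K where "K = (if d + 1 \<le> k then k else Suc k)"
    have IK: "Inv S K"
    proof (cases "d + 1 \<le> k")
      case True then show ?thesis using I1 K_def by simp
    next
      case False
      then have "d = k" using dk by simp
      then have "N = 2*k+1" using bd b_eq N al b_def l2 by linarith
      then show ?thesis using I2 K_def False by simp
    qed
    have cmK: "c + m \<le> K" using dc dk m_def K_def by auto
    obtain p i where pi: "p + m \<le> K" "eqf c p m" "i \<in> S" "p \<le> i" "i + 1 < p + m"
      using IK cmK m2 unfolding Inv_def by blast
    have slm: "s + l \<le> 2*m" using a_eq b_def b_eq m_def dc l2 by linarith
    have "eqf a (2*p+s) l" using eqf_double[OF pi(2) slm] a_eq by simp
    moreover have "2*p+s + l \<le> N"
    proof (cases "d + 1 \<le> k")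
      case True
      then have "K = k" using K_def by simp
      have "b mod 2 < 2" by simp
      then show ?thesis using pi(1) \<open>K = k\<close> a_eq b_def b_eq m_def dc l2 N by linarith
    next
      case False
      then have "d = k" using dk by simp
      then have "b = 2*k" "N = 2*k+1" using bd b_eq N al b_def l2 by linarith+
      moreover have "K = Suc k" using K_def False by simp
      ultimately show ?thesis using pi(1) a_eq b_def m_def dc l2 \<open>d = k\<close> by linarith
    qed
    moreover have "2*p+s \<le> 2*i+1" using pi(4) s2 by linarith
    moreover have "2*i+1+1 < 2*p+s+l" using pi(5) a_eq b_def b_eq m_def dc l2 s2 by linarith
    ultimately show ?thesis using pi(3) by blast
  qed
qed

lemma take_drop_tm: "p + l \<le> n \<Longrightarrow> take l (drop p (map tmf [0..<n])) = map tmf [p..<p+l]"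
  by (simp add: drop_map take_map)

lemma factor_tm: "p \<le> q \<Longrightarrow> q < n \<Longrightarrow> factor (map tmf [0..<n]) p q = map tmf [p..<p + (Suc q - p)]"
  unfolding factor_def by (rule take_drop_tm) linarith

lemma map_upt_eqf: "map tmf [a..<a+l] = map tmf [p..<p+l] \<longleftrightarrow> eqf a p l"
  unfolding eqf_def by (auto simp: list_eq_iff_nth_eq)

lemma att_W:
  assumes "string_attractor (tm_prefix n) S"
  shows "W S n"
  unfolding W_def
proof (intro allI impI)
  fix a l assume l: "2 \<le> l" "a + l \<le> n"
  let ?w = "map tmf [0..<n]"
  have A: "string_attractor ?w S" using assms by (simp add: tm_prefix_tmf)
  have "a \<le> a + l - 1 \<and> a + l - 1 < length ?w" using l by simp linarith
  then have "\<exists>p' q'. p' \<le> q' \<and> q' < length ?w \<and> factor ?w p' q' = factor ?w a (a+l-1) \<and>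
      (\<exists>i. i \<in> S \<and> p' \<le> i \<and> i \<le> q')"
    using A unfolding string_attractor_def by blast
  then obtain p' q' i where h: "p' \<le> q'" "q' < n" "factor ?w p' q' = factor ?w a (a+l-1)"
      "i \<in> S" "p' \<le> i" "i \<le> q'"
    by auto
  have "map tmf [p'..<p' + (Suc q' - p')] = map tmf [a..<a + (Suc (a+l-1) - a)]"
    using h(3) factor_tm[of p' q' n] factor_tm[of a "a+l-1" n] h(1,2) l by simp
  moreover have "Suc (a+l-1) - a = l" using l by simp
  ultimately have e: "map tmf [p'..<p' + (Suc q' - p')] = map tmf [a..<a + l]" by simp
  then have "Suc q' - p' = l" by (metis length_map length_upt diff_add_inverse)
  then have "eqf a p' l" using e map_upt_eqf by metis
  moreover have "p' + l \<le> n" "i < p' + l" using h \<open>Suc q' - p' = l\<close> by linarith+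
  ultimately show "\<exists>p i. p + l \<le> n \<and> eqf a p l \<and> i \<in> S \<and> p \<le> i \<and> i < p + l"
    using h by blast
qed

lemma Inv_att:
  assumes "Inv S n" "3 \<le> n"
  shows "string_attractor (tm_prefix n) S"
  unfolding string_attractor_def tm_prefix_tmf
proof (intro conjI allI impI)
  show "S \<subseteq> {0..<length (map tmf [0..<n])}" using assms(1) unfolding Inv_def by force
next
  fix p q assume pq: "p \<le> q \<and> q < length (map tmf [0..<n])"
  then have pq: "p \<le> q" "q < n" by auto
  show "\<exists>p' q' i. p' \<le> q' \<and> q' < length (map tmf [0..<n]) \<and>
          factor (map tmf [0..<n]) p' q' = factor (map tmf [0..<n]) p q \<and> i \<in> S \<and> p' \<le> i \<and> i \<le> q'"
  proof (cases "p < q")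
    case True
    define l where "l = Suc q - p"
    have l: "2 \<le> l" "p + l \<le> n" using True pq l_def by auto
    then obtain p0 i where h: "p0 + l \<le> n" "eqf p p0 l" "i \<in> S" "p0 \<le> i" "i + 1 < p0 + l"
      using assms(1) unfolding Inv_def by blast
    define q0 where "q0 = p0 + l - 1"
    have "factor (map tmf [0..<n]) p0 q0 = map tmf [p0..<p0+l]"
      using factor_tm[of p0 q0 n] h(1) l q0_def by simp
    also have "\<dots> = map tmf [p..<p+l]" using h(2) map_upt_eqf by metis
    also have "\<dots> = factor (map tmf [0..<n]) p q" using factor_tm[of p q n] pq l_def by simp
    finally show ?thesis using h q0_def l by (intro exI[of _ p0] exI[of _ q0] exI[of _ i]) auto
  next
    case False
    then have pq': "p = q" using pq by simp
    define x where "x = tmf p"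
    define a0 where "a0 = (if x = 0 then 0 else (1::nat))"
    have x01: "x = 0 \<or> x = 1" using tmf_cases x_def by simp
    have a0: "tmf a0 = x" "a0 + 2 \<le> n" using x01 assms(2) a0_def by auto
    obtain p0 i where h: "p0 + 2 \<le> n" "eqf a0 p0 2" "i \<in> S" "p0 \<le> i" "i + 1 < p0 + 2"
      using assms(1) a0(2) unfolding Inv_def by (metis order_refl)
    have "i = p0" using h by simp
    then have "tmf i = x" using h(2) a0 unfolding eqf_def by (metis add.right_neutral zero_less_numeral)
    then have "factor (map tmf [0..<n]) i i = factor (map tmf [0..<n]) p q"
      using factor_tm[of i i n] factor_tm[of p q n] pq pq' h x_def by simp
    then show ?thesis using h \<open>i = p0\<close> by (intro exI[of _ i] exI[of _ i] exI[of _ i]) auto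
  qed
qed

definition occs :: "nat list \<Rightarrow> nat list \<Rightarrow> nat list" where
  "occs w f = filter (\<lambda>p. take (length f) (drop p w) = f) [0..<Suc (length w) - length f]"
definition covl :: "nat list \<Rightarrow> nat list \<Rightarrow> nat list" where
  "covl w f = concat (map (\<lambda>p. [p..<p + length f]) (occs w f))"

lemma occs_iff: "p \<in> set (occs w f) \<longleftrightarrow> p + length f \<le> length w \<and> take (length f) (drop p w) = f"
  unfolding occs_def by auto

lemma covl_iff: "i \<in> set (covl w f) \<longleftrightarrow>
   (\<exists>p. p + length f \<le> length w \<and> take (length f) (drop p w) = f \<and> p \<le> i \<and> i < p + length f)"
  unfolding covl_def using occs_iff by auto

lemma att_hit:
  assumes "string_attractor w S" "f \<noteq> []" "occs w f \<noteq> []"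
  shows "\<exists>i\<in>S. i \<in> set (covl w f)"
proof -
  obtain p0 where p0: "p0 + length f \<le> length w" "take (length f) (drop p0 w) = f"
    using assms(3) occs_iff by (metis last_in_set)
  define q0 where "q0 = p0 + length f - 1"
  have fq: "factor w p0 q0 = f" using p0 assms(2) q0_def unfolding factor_def by simp
  have "p0 \<le> q0 \<and> q0 < length w" using p0 assms(2) q0_def by (cases f) auto
  then obtain p' q' i where h: "p' \<le> q'" "q' < length w" "factor w p' q' = f" "i \<in> S" "p' \<le> i" "i \<le> q'"
    using assms(1) fq unfolding string_attractor_def by metis
  have fe: "f = take (Suc q' - p') (drop p' w)" using h(3) by (simp add: factor_def)
  have lf: "length f = Suc q' - p'" using h(1,2) by (subst fe) simp
  have "p' + length f \<le> length w" "take (length f) (drop p' w) = f" "i < p' + length f"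
    using h lf unfolding factor_def by auto
  then show ?thesis using h covl_iff by blast
qed

lemma W_hit:
  assumes "W S n" "2 \<le> length f" "occs (map tmf [0..<n]) f \<noteq> []"
  shows "\<exists>i\<in>S. i \<in> set (covl (map tmf [0..<n]) f)"
proof -
  let ?w = "map tmf [0..<n]"
  obtain p0 where p0: "p0 + length f \<le> n" "take (length f) (drop p0 ?w) = f"
    using assms(3) occs_iff by (metis last_in_set length_map length_upt minus_nat.diff_0)
  then have f: "f = map tmf [p0..<p0 + length f]" using take_drop_tm by metis
  obtain p i where h: "p + length f \<le> n" "eqf p0 p (length f)" "i \<in> S" "p \<le> i" "i < p + length f"
    using assms(1,2) p0(1) unfolding W_def by blast
  have "take (length f) (drop p ?w) = map tmf [p..<p + length f]" using h(1) take_drop_tm by metis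
  also have "\<dots> = f" using h(2) f map_upt_eqf by metis
  finally show ?thesis using h covl_iff by fastforce
qed

fun nohit :: "nat \<Rightarrow> nat list \<Rightarrow> nat list list \<Rightarrow> bool" where
  "nohit 0 ch Ms = (find (\<lambda>m. \<forall>i\<in>set ch. i \<notin> set m) Ms \<noteq> None)"
| "nohit (Suc k) ch Ms = (case find (\<lambda>m. \<forall>i\<in>set ch. i \<notin> set m) Ms of None \<Rightarrow> False
      | Some m \<Rightarrow> list_all (\<lambda>i. nohit k (i#ch) Ms) m)"

lemma nohit_sound:
  "nohit k ch Ms \<Longrightarrow> finite S \<Longrightarrow> card S \<le> k \<Longrightarrow> (\<forall>m\<in>set Ms. \<exists>i\<in>set ch \<union> S. i \<in> set m) \<Longrightarrow> False"
proof (induction k arbitrary: ch S)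
  case 0
  then obtain m where "find (\<lambda>m. \<forall>i\<in>set ch. i \<notin> set m) Ms = Some m" by auto
  then have "m \<in> set Ms" "\<forall>i\<in>set ch. i \<notin> set m" by (auto simp: find_Some_iff nth_mem)
  moreover have "S = {}" using 0 by simp
  ultimately show False using 0 by auto
next
  case (Suc k)
  obtain m where m: "find (\<lambda>m. \<forall>i\<in>set ch. i \<notin> set m) Ms = Some m"
    using Suc.prems(1) by (cases "find (\<lambda>m. \<forall>i\<in>set ch. i \<notin> set m) Ms") auto
  then have mm: "m \<in> set Ms" "\<forall>i\<in>set ch. i \<notin> set m" by (auto simp: find_Some_iff nth_mem)
  then obtain i where i: "i \<in> S" "i \<in> set m" using Suc.prems(4) by blast
  have "nohit k (i#ch) Ms" using Suc.prems(1) m i by (simp add: list_all_iff)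
  moreover have "card (S - {i}) \<le> k" using Suc.prems(2,3) i by simp
  moreover have "\<forall>m\<in>set Ms. \<exists>j\<in>set (i#ch) \<union> (S - {i}). j \<in> set m" using Suc.prems(4) by auto
  ultimately show False using Suc.IH Suc.prems(2) by blast
qed

definition isatt :: "nat list \<Rightarrow> nat list \<Rightarrow> bool" where
  "isatt w S = list_all (\<lambda>p. list_all (\<lambda>q.
      list_ex (\<lambda>i. p \<le> i \<and> i \<le> q) S \<or>
      list_ex (\<lambda>i. list_ex (\<lambda>p'. p' + (q - p) < length w \<and>
          take (Suc (q - p)) (drop p' w) = take (Suc (q - p)) (drop p w)) [i - (q - p)..<Suc i]) S)
     [p..<length w]) [0..<length w]"

definition isinv :: "nat list \<Rightarrow> nat list \<Rightarrow> bool" where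
  "isinv w S = (list_all (\<lambda>i. i + 1 < length w) S \<and> list_all (\<lambda>p. list_all (\<lambda>q.
      list_ex (\<lambda>i. p \<le> i \<and> i < q) S \<or>
      list_ex (\<lambda>i. list_ex (\<lambda>p'. p' + (q - p) < length w \<and>
          take (Suc (q - p)) (drop p' w) = take (Suc (q - p)) (drop p w)) [Suc i - (q - p)..<Suc i]) S)
     [Suc p..<length w]) [0..<length w])"

lemma isatt_sound:
  assumes "isatt w A" "list_all (\<lambda>i. i < length w) A"
  shows "string_attractor w (set A)"
  unfolding string_attractor_def
proof (intro conjI allI impI)
  show "set A \<subseteq> {0..<length w}" using assms(2) by (auto simp: list_all_iff)
next
  fix p q assume pq: "p \<le> q \<and> q < length w"
  then have "list_ex (\<lambda>i. p \<le> i \<and> i \<le> q) A \<or>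
      list_ex (\<lambda>i. list_ex (\<lambda>p'. p' + (q - p) < length w \<and>
          take (Suc (q - p)) (drop p' w) = take (Suc (q - p)) (drop p w)) [i - (q - p)..<Suc i]) A"
    using assms(1) unfolding isatt_def list_all_iff by auto
  then show "\<exists>p' q' i. p' \<le> q' \<and> q' < length w \<and> factor w p' q' = factor w p q \<and> i \<in> set A \<and> p' \<le> i \<and> i \<le> q'"
  proof
    assume "list_ex (\<lambda>i. p \<le> i \<and> i \<le> q) A"
    then show ?thesis using pq by (auto simp: list_ex_iff)
  next
    assume "list_ex (\<lambda>i. list_ex (\<lambda>p'. p' + (q - p) < length w \<and>
          take (Suc (q - p)) (drop p' w) = take (Suc (q - p)) (drop p w)) [i - (q - p)..<Suc i]) A"
    then obtain i where i: "i \<in> set A" "\<exists>p'\<in>set [i - (q - p)..<Suc i]. p' + (q - p) < length w \<and>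
          take (Suc (q - p)) (drop p' w) = take (Suc (q - p)) (drop p w)"
      unfolding list_ex_iff by blast
    then obtain p' where p': "p' \<in> set [i - (q - p)..<Suc i]" "p' + (q - p) < length w"
          "take (Suc (q - p)) (drop p' w) = take (Suc (q - p)) (drop p w)" by blast
    have h: "i \<in> set A" "i - (q - p) \<le> p'" "p' \<le> i" "p' + (q - p) < length w"
       "take (Suc (q - p)) (drop p' w) = take (Suc (q - p)) (drop p w)" using i p' by auto
    have "factor w p' (p' + (q - p)) = factor w p q" using h(5) pq unfolding factor_def
      by (metis Suc_diff_le add_diff_cancel_left' le_add1)
    then show ?thesis using h by (intro exI[of _ p'] exI[of _ "p' + (q - p)"] exI[of _ i]) auto
  qed
qed

lemma isinv_sound:
  assumes "isinv (map tmf [0..<n]) A"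
  shows "Inv (set A) n"
  unfolding Inv_def
proof (intro conjI allI impI ballI)
  fix i assume "i \<in> set A" then show "i + 1 < n" using assms unfolding isinv_def by (auto simp: list_all_iff)
next
  fix a l assume l: "2 \<le> l" "a + l \<le> n"
  let ?w = "map tmf [0..<n]"
  define q where "q = a + l - 1"
  have qa: "q - a = l - 1" "Suc (q - a) = l" "q \<in> set [Suc a..<length ?w]" "a \<in> set [0..<length ?w]"
    using l q_def by auto
  then have "list_ex (\<lambda>i. a \<le> i \<and> i < q) A \<or>
      list_ex (\<lambda>i. list_ex (\<lambda>p'. p' + (q - a) < length ?w \<and>
          take (Suc (q - a)) (drop p' ?w) = take (Suc (q - a)) (drop a ?w)) [Suc i - (q - a)..<Suc i]) A"
    using assms unfolding isinv_def list_all_iff by blast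
  then show "\<exists>p i. p + l \<le> n \<and> eqf a p l \<and> i \<in> set A \<and> p \<le> i \<and> i + 1 < p + l"
  proof
    assume "list_ex (\<lambda>i. a \<le> i \<and> i < q) A"
    then obtain i where "i \<in> set A" "a \<le> i" "i < q" by (auto simp: list_ex_iff)
    moreover have "eqf a a l" unfolding eqf_def by simp
    ultimately show ?thesis using l q_def by (intro exI[of _ a] exI[of _ i]) auto
  next
    assume "list_ex (\<lambda>i. list_ex (\<lambda>p'. p' + (q - a) < length ?w \<and>
          take (Suc (q - a)) (drop p' ?w) = take (Suc (q - a)) (drop a ?w)) [Suc i - (q - a)..<Suc i]) A"
    then obtain i p' where h: "i \<in> set A" "Suc i - (q - a) \<le> p'" "p' \<le> i" "p' + (q - a) < n"
       "take l (drop p' ?w) = take l (drop a ?w)"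
      using qa by (auto simp: list_ex_iff)
    have "p' + l \<le> n" using h(4) qa l by linarith
    then have "map tmf [p'..<p'+l] = map tmf [a..<a+l]" using h(5) take_drop_tm l by metis
    then have "eqf a p' l" using map_upt_eqf by metis
    moreover have "i + 1 < p' + l" using h(2) qa l by linarith
    ultimately show ?thesis using h \<open>p' + l \<le> n\<close> by blast
  qed
qed

definition smallA_tab :: "nat list list" where
  "smallA_tab = [[],[0],[0,1],[0,1],[0,2],[1,3],[1,3],[1,2,5],[1,2,5],[1,2,5],[0,2,5],[2,5,7],[2,5,7],[2,5,10],[3,7,10],[1,5,9,11],[1,5,9,11],[5,9,13],[5,9,13],[5,9,13],[5,9,13],[7,13,17],[7,13,17],[7,13,17],[7,13,17]]"
definition smallF_tab :: "nat list list list" where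
  "smallF_tab = [[],[[0]],[[0],[1]],[[0],[1]],[[0],[1]],[[0],[1,1]],[[1,1],[0]],[[1,1],[0,0],[1,0,1],[0,1]],[[1,1],[0,0],[1,0,1],[0,1,0],[0,1]],[[0,0],[1,0,1],[0,1,0],[1,1],[0,1]],[[0,0],[1,0,1],[0,1,0],[1,1],[0,1]],[[1,0,1],[0,0,1],[0,0],[1,1,0,0]],[[1,0,1],[0,1,0],[1,1],[0,0],[1,1,0,0]],[[1,0,1],[1,1],[0,0],[0,1,0,0],[1,1,0,0]],[[1,1],[0,0],[1,1,0,1],[0,1,0,0],[1,1,0,0]],[[0,0],[1,1,0,1],[0,0,1,1],[1,1,0,0],[1,0,1,1]],[[0,0],[1,1,0,1],[0,0,1,1],[1,1,0,0],[1,0,1,1]],[[1,0,1,0],[1,1,0,0],[1,0,1,1]],[[0,1,0,0],[1,1,0,0],[1,0,1,1]],[[0,0,1,1],[1,1,0,0],[1,0,1,1],[0,0]],[[0,0,1,1],[1,1,0,0],[1,0,1,1],[0,0]],[[0,0,1,1],[1,1,0,0],[1,0,1,1],[0,0]],[[0,0,1,1],[1,1,0,0],[1,0,1,1],[0,0]],[[0,0,1,1],[1,1,0,0],[1,0,1,1,0],[0,0]],[[0,0,1,1],[1,1,0,0],[0,0],[1,0,1,1,0,1]]]"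
definition lowF_tab :: "nat list list list" where
  "lowF_tab = [[[0,0,1,1],[1,1,0,0,1],[1,0,1,1,0,1],[0,1,0,0,1,0],[1,0,1,1,0,0],[1,1],[0,0],[0,0,1,0]],[[0,0,1,1],[1,1,0,0,1,0],[1,0,1,1,0,1],[0,1,0,0,1,0],[1,0,1,1,0,0],[1,1],[0,0],[0,0,1,0]],[[0,1,0,0,1,1],[1,0,1,1,0,1],[0,1,0,0,1,0],[1,1,0,0,1,1],[0,0,1,0]],[[0,1,0,0,1,1],[1,0,1,1,0,1],[0,1,0,0,1,0],[1,1,0,0,1,1],[0,0,1,0]],[[0,1,0,0,1,1],[1,0,1,1,0,1],[0,1,0,0,1,0],[1,1,0,0,1,1],[0,0,1,0]],[[0,1,0,0,1,1],[1,0,1,1,0,1],[0,1,0,0,1,0],[1,1,0,0,1,1],[0,0,1,0]],[[0,1,0,0,1,1],[1,0,1,1,0,1],[0,1,0,0,1,0],[1,1,0,0,1,1],[0,0,1,0]],[[0,1,0,0,1,1],[1,0,1,1,0,1],[0,1,0,0,1,0],[1,1,0,0,1,1],[0,0,1,0]],[[1,0,1,1,0,1],[0,1,0,0,1,0],[0,0,1,1,0,1],[0,1,0,0,1,1,0],[0,1,0,1]],[[0,0,1,1,0,0],[1,0,1,1,0,1],[0,1,0,0,1,0],[0,0,1,1,0,1],[1,0,1,1]],[[1,1,0,0,1,0],[1,0,1,1,0,1],[0,1,0,0,1,0],[1,0,1,1,0,0],[0,0,1,1,0,1],[0,0,1,0],[1,1],[0,0]],[[1,1,0,0,1,0],[1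,0,1,1,0,1],[0,1,0,0,1,0],[1,0,1,1,0,0],[0,0,1,1,0,1],[0,0,1,0],[1,1],[0,0]],[[1,0,1,1,0,1],[0,1,0,0,1,0],[1,1,0,0,1,1],[0,0,1,1,0,1],[1,1,0,0,1,0,1],[0,1,0,1],[0,1,0,0,1,1]],[[1,0,1,1,0,1],[0,1,0,0,1,0],[1,1,0,0,1,1],[0,0,1,1,0,1],[1,0,1,1],[1,1,0,0,1,0,1,1],[0,1,0,0,1,1]],[[1,0,1,1,0,1],[0,1,0,0,1,0],[1,1,0,0,1,1],[0,0,1,0],[0,1,0,0,1,1]],[[1,0,1,1,0,1],[0,1,0,0,1,0],[1,1,0,0,1,1],[0,0,1,0],[0,1,0,0,1,1]],[[1,0,1,1,0,1],[0,1,0,0,1,0],[1,1,0,0,1,1],[0,0,1,0],[0,1,0,0,1,1]],[[1,0,1,1,0,1],[0,1,0,0,1,0],[1,1,0,0,1,1],[0,0,1,0],[0,1,0,0,1,1]],[[1,0,1,1,0,1],[0,1,0,0,1,0],[0,0,1,1,0,1],[1,0,1,1],[0,0,1,1,0,0]],[[1,0,1,1,0,1],[0,1,0,0,1,0],[0,0,1,1,0,1],[1,0,1,1],[0,0,1,1,0,0]],[[1,0,1,1,0,1],[0,1,0,0,1,0],[0,0,1,0],[0,1,0,0,1,1],[1,1,0,0,1,1]],[[1,0,1,1,0,1],[0,1,0,0,1,0],[0,0,1,0],[0,1,0,0,1,1],[1,1,0,0,1,1]],[[1,0,1,1,0,1],[0,1,0,0,1,0],[0,0,1,0],[0,1,0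,0,1,1],[1,1,0,0,1,1]],[[1,0,1,1,0,1],[0,1,0,0,1,0],[0,0,1,0],[0,1,0,0,1,1],[1,1,0,0,1,1]],[[1,0,1,1,0,1],[0,1,0,0,1,0,1],[0,0,1,1,0,1,0,0,1,1],[0,0,1,1,0,1,0,0,1,0],[0,1,0,1]]]"

definition tv :: "nat \<Rightarrow> nat" where
  "tv n = (if n = 1 then 1
     else if n \<le> 6 then 2
     else if (7 \<le> n \<and> n \<le> 14) \<or> (17 \<le> n \<and> n \<le> 24) then 3
     else 4)"

definition smallchk :: "nat \<Rightarrow> bool" where
  "smallchk n = (let w = map tmf [0..<n]; A = smallA_tab ! n; F = smallF_tab ! n in
     isatt w A \<and> distinct A \<and> length A = tv n \<and> list_all (\<lambda>i. i < n) A \<and>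
     nohit (tv n - 1) [] (map (covl w) F) \<and> list_all (\<lambda>f. f \<noteq> [] \<and> occs w f \<noteq> []) F)"

definition lowchk :: "nat \<Rightarrow> bool" where
  "lowchk n = (let w = map tmf [0..<n]; F = lowF_tab ! (n - 25) in
     nohit 3 [] (map (covl w) F) \<and> list_all (\<lambda>f. 2 \<le> length f \<and> occs w f \<noteq> []) F)"

lemma small_1: "smallchk 1" by code_simp
lemma small_2: "smallchk 2" by code_simp
lemma small_3: "smallchk 3" by code_simp
lemma small_4: "smallchk 4" by code_simp
lemma small_5: "smallchk 5" by code_simp
lemma small_6: "smallchk 6" by code_simp
lemma small_7: "smallchk 7" by code_simp
lemma small_8: "smallchk 8" by code_simp
lemma small_9: "smallchk 9" by code_simp
lemma small_10: "smallchk 10" by code_simp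
lemma small_11: "smallchk 11" by code_simp
lemma small_12: "smallchk 12" by code_simp
lemma small_13: "smallchk 13" by code_simp
lemma small_14: "smallchk 14" by code_simp
lemma small_15: "smallchk 15" by code_simp
lemma small_16: "smallchk 16" by code_simp
lemma small_17: "smallchk 17" by code_simp
lemma small_18: "smallchk 18" by code_simp
lemma small_19: "smallchk 19" by code_simp
lemma small_20: "smallchk 20" by code_simp
lemma small_21: "smallchk 21" by code_simp
lemma small_22: "smallchk 22" by code_simp
lemma small_23: "smallchk 23" by code_simp
lemma small_24: "smallchk 24" by code_simp
lemma low_25: "lowchk 25" by code_simp
lemma low_26: "lowchk 26" by code_simp
lemma low_27: "lowchk 27" by code_simp
lemma low_28: "lowchk 28" by code_simp
lemma low_29: "lowchk 29" by code_simp
lemma low_30: "lowchk 30" by code_simp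
lemma low_31: "lowchk 31" by code_simp
lemma low_32: "lowchk 32" by code_simp
lemma low_33: "lowchk 33" by code_simp
lemma low_34: "lowchk 34" by code_simp
lemma low_35: "lowchk 35" by code_simp
lemma low_36: "lowchk 36" by code_simp
lemma low_37: "lowchk 37" by code_simp
lemma low_38: "lowchk 38" by code_simp
lemma low_39: "lowchk 39" by code_simp
lemma low_40: "lowchk 40" by code_simp
lemma low_41: "lowchk 41" by code_simp
lemma low_42: "lowchk 42" by code_simp
lemma low_43: "lowchk 43" by code_simp
lemma low_44: "lowchk 44" by code_simp
lemma low_45: "lowchk 45" by code_simp
lemma low_46: "lowchk 46" by code_simp
lemma low_47: "lowchk 47" by code_simp
lemma low_48: "lowchk 48" by code_simp
lemma low_49: "lowchk 49" by code_simp
lemma inva_12: "isinv (map tmf [0..<12]) [3,7,8,9]" by code_simp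
lemma inva_13: "isinv (map tmf [0..<13]) [3,7,8,9]" by code_simp
lemma invb_13: "isinv (map tmf [0..<13]) [3,7,9,11]" by code_simp
lemma invb_14: "isinv (map tmf [0..<14]) [3,7,9,11]" by code_simp
lemma invb_15: "isinv (map tmf [0..<15]) [3,7,9,11]" by code_simp
lemma invb_16: "isinv (map tmf [0..<16]) [3,7,9,11]" by code_simp
lemma invb_17: "isinv (map tmf [0..<17]) [3,7,9,11]" by code_simp
lemma invb_18: "isinv (map tmf [0..<18]) [3,7,9,11]" by code_simp
lemma invb_19: "isinv (map tmf [0..<19]) [3,7,9,11]" by code_simp
lemma invb_20: "isinv (map tmf [0..<20]) [3,7,9,11]" by code_simp
lemma invc_20: "isinv (map tmf [0..<20]) [3,7,11,17]" by code_simp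
lemma invc_21: "isinv (map tmf [0..<21]) [3,7,11,17]" by code_simp
lemma invc_22: "isinv (map tmf [0..<22]) [3,7,11,17]" by code_simp
lemma invc_23: "isinv (map tmf [0..<23]) [3,7,11,17]" by code_simp
lemma invc_24: "isinv (map tmf [0..<24]) [3,7,11,17]" by code_simp

lemma small_all: "1 \<le> n \<Longrightarrow> n \<le> 24 \<Longrightarrow> smallchk n"
proof -
  assume "1 \<le> n" "n \<le> 24"
  then have "n = 1 \<or> n = 2 \<or> n = 3 \<or> n = 4 \<or> n = 5 \<or> n = 6 \<or> n = 7 \<or> n = 8 \<or> n = 9 \<or> n = 10 \<or> n = 11 \<or> n = 12 \<or> n = 13 \<or> n = 14 \<or> n = 15 \<or> n = 16 \<or> n = 17 \<or> n = 18 \<or> n = 19 \<or> n = 20 \<or> n = 21 \<or> n = 22 \<or> n = 23 \<or> n = 24" by presburger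
  then show ?thesis using small_1 small_2 small_3 small_4 small_5 small_6 small_7 small_8 small_9 small_10 small_11 small_12 small_13 small_14 small_15 small_16 small_17 small_18 small_19 small_20 small_21 small_22 small_23 small_24 by blast
qed

lemma low_all: "25 \<le> n \<Longrightarrow> n \<le> 49 \<Longrightarrow> lowchk n"
proof -
  assume "25 \<le> n" "n \<le> 49"
  then have "n = 25 \<or> n = 26 \<or> n = 27 \<or> n = 28 \<or> n = 29 \<or> n = 30 \<or> n = 31 \<or> n = 32 \<or> n = 33 \<or> n = 34 \<or> n = 35 \<or> n = 36 \<or> n = 37 \<or> n = 38 \<or> n = 39 \<or> n = 40 \<or> n = 41 \<or> n = 42 \<or> n = 43 \<or> n = 44 \<or> n = 45 \<or> n = 46 \<or> n = 47 \<or> n = 48 \<or> n = 49" by presburger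
  then show ?thesis using low_25 low_26 low_27 low_28 low_29 low_30 low_31 low_32 low_33 low_34 low_35 low_36 low_37 low_38 low_39 low_40 low_41 low_42 low_43 low_44 low_45 low_46 low_47 low_48 low_49 by blast
qed

definition Qp :: "nat \<Rightarrow> bool" where
  "Qp n \<longleftrightarrow> (\<exists>S. finite S \<and> card S = 4 \<and> Inv S n \<and> Inv S (Suc n))"

lemma invB: "13 \<le> m \<Longrightarrow> m \<le> 20 \<Longrightarrow> Inv (set [3,7,9,11]) m"
proof -
  assume "13 \<le> m" "m \<le> 20"
  then have "m = 13 \<or> m = 14 \<or> m = 15 \<or> m = 16 \<or> m = 17 \<or> m = 18 \<or> m = 19 \<or> m = 20" by presburger
  then have "isinv (map tmf [0..<m]) [3,7,9,11]"
    using invb_13 invb_14 invb_15 invb_16 invb_17 invb_18 invb_19 invb_20 by blast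
  then show ?thesis by (rule isinv_sound)
qed

lemma invC: "20 \<le> m \<Longrightarrow> m \<le> 24 \<Longrightarrow> Inv (set [3,7,11,17]) m"
proof -
  assume "20 \<le> m" "m \<le> 24"
  then have "m = 20 \<or> m = 21 \<or> m = 22 \<or> m = 23 \<or> m = 24" by presburger
  then have "isinv (map tmf [0..<m]) [3,7,11,17]"
    using invc_20 invc_21 invc_22 invc_23 invc_24 by blast
  then show ?thesis by (rule isinv_sound)
qed

lemma invA: "12 \<le> m \<Longrightarrow> m \<le> 13 \<Longrightarrow> Inv (set [3,7,8,9]) m"
proof -
  assume "12 \<le> m" "m \<le> 13"
  then have "m = 12 \<or> m = 13" by presburger
  then have "isinv (map tmf [0..<m]) [3,7,8,9]"
    using inva_12 inva_13 by blast
  then show ?thesis by (rule isinv_sound)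
qed

lemma Qp_base: "12 \<le> n \<Longrightarrow> n \<le> 23 \<Longrightarrow> Qp n"
proof -
  assume n: "12 \<le> n" "n \<le> 23"
  have ca: "card (set [3,7,8,9::nat]) = 4" and cb: "card (set [3,7,9,11::nat]) = 4"
    and cc: "card (set [3,7,11,17::nat]) = 4" by simp_all
  have "n = 12 \<or> (13 \<le> n \<and> n \<le> 19) \<or> (20 \<le> n \<and> n \<le> 23)" using n by arith
  moreover have "n = 12 \<Longrightarrow> Qp n" unfolding Qp_def
    using invA[of n] invA[of "Suc n"] ca by (intro exI[of _ "set [3,7,8,9]"]) simp
  moreover have "13 \<le> n \<and> n \<le> 19 \<Longrightarrow> Qp n" unfolding Qp_def
    using invB[of n] invB[of "Suc n"] cb by (intro exI[of _ "set [3,7,9,11]"]) simp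
  moreover have "20 \<le> n \<and> n \<le> 23 \<Longrightarrow> Qp n" unfolding Qp_def
    using invC[of n] invC[of "Suc n"] cc by (intro exI[of _ "set [3,7,11,17]"]) simp
  ultimately show ?thesis by blast
qed

lemma Qp_all: "12 \<le> n \<Longrightarrow> Qp n"
proof (induction n rule: less_induct)
  case (less n)
  show ?case
  proof (cases "n \<le> 23")
    case True then show ?thesis using Qp_base less.prems by simp
  next
    case False
    define k where "k = n div 2"
    have k: "12 \<le> k" "k < n" using False k_def by auto
    then obtain S where S: "finite S" "card S = 4" "Inv S k" "Inv S (Suc k)"
      using less.IH unfolding Qp_def by blast
    let ?S' = "(\<lambda>i. 2*i+1) ` S"
    have c: "card ?S' = 4" using S by (simp add: card_image inj_on_def)
    have nk: "n = 2*k \<or> n = 2*k+1" using k_def by auto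
    have I1: "Inv ?S' n" using Inv_double[OF S(3) _ _ nk] S(4) k by simp
    have I2: "Inv ?S' (Suc n)"
    proof (cases "n = 2*k")
      case True
      then show ?thesis using Inv_double[OF S(3), of "Suc n"] S(4) k by simp
    next
      case False
      then have "Suc n = 2*(Suc k)" using nk by simp
      moreover have "7 \<le> Suc k" using k by simp
      ultimately show ?thesis using Inv_double[OF S(4), of "Suc n"] by simp
    qed
    show ?thesis unfolding Qp_def using S(1) c I1 I2 by blast
  qed
qed

lemma low_W: "25 \<le> n \<Longrightarrow> finite S \<Longrightarrow> card S \<le> 3 \<Longrightarrow> W S n \<Longrightarrow> False"
proof (induction n arbitrary: S rule: less_induct)
  case (less n)
  show ?case
  proof (cases "n \<le> 49")
    case True
    then have "lowchk n" using low_all less.prems by simp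
    then have h: "nohit 3 [] (map (covl (map tmf [0..<n])) (lowF_tab ! (n - 25)))"
      "list_all (\<lambda>f. 2 \<le> length f \<and> occs (map tmf [0..<n]) f \<noteq> []) (lowF_tab ! (n - 25))"
      unfolding lowchk_def Let_def by auto
    have "\<forall>m\<in>set (map (covl (map tmf [0..<n])) (lowF_tab ! (n - 25))). \<exists>i\<in>set [] \<union> S. i \<in> set m"
      using h(2) W_hit[OF less.prems(4)] by (auto simp: list_all_iff)
    then show False using nohit_sound[OF h(1) less.prems(2,3)] by blast
  next
    case False
    have "W ((\<lambda>i. i div 2) ` S) (n div 2)" using W_half less.prems(4) by blast
    moreover have "card ((\<lambda>i. i div 2) ` S) \<le> 3" using card_image_le[OF less.prems(2)] less.prems(3) by (meson le_trans)
    moreover have "25 \<le> n div 2" "n div 2 < n" using False by auto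
    ultimately show False using less.IH less.prems(2) by blast
  qed
qed

lemma mas_char:
  assumes "string_attractor w S0" "card S0 = v" "\<And>S. string_attractor w S \<Longrightarrow> v \<le> card S"
  shows "min_attractor_size w = v"
  unfolding min_attractor_size_def
  by (rule Least_equality) (use assms in auto)

lemma att_finite: "string_attractor w S \<Longrightarrow> finite S"
  unfolding string_attractor_def using finite_subset by blast

theorem theorem5:
  fixes n :: nat
  assumes "n \<ge> 1"
  shows "min_attractor_size (tm_prefix n) =
    (if n = 1 then 1
     else if n \<le> 6 then 2
     else if (7 \<le> n \<and> n \<le> 14) \<or> (17 \<le> n \<and> n \<le> 24) then 3
     else 4)"
proof -
  let ?w = "map tmf [0..<n]"
  have w: "tm_prefix n = ?w" by (rule tm_prefix_tmf)
  have rhs: "(if n = 1 then 1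
     else if n \<le> 6 then 2
     else if (7 \<le> n \<and> n \<le> 14) \<or> (17 \<le> n \<and> n \<le> 24) then 3
     else 4) = tv n" unfolding tv_def by simp
  show ?thesis unfolding rhs
  proof (cases "n \<le> 24")
    case True
    then have "smallchk n" using small_all assms by simp
    then have h: "isatt ?w (smallA_tab ! n)" "distinct (smallA_tab ! n)" "length (smallA_tab ! n) = tv n"
      "list_all (\<lambda>i. i < n) (smallA_tab ! n)"
      "nohit (tv n - 1) [] (map (covl ?w) (smallF_tab ! n))"
      "list_all (\<lambda>f. f \<noteq> [] \<and> occs ?w f \<noteq> []) (smallF_tab ! n)"
      unfolding smallchk_def Let_def by auto
    have att: "string_attractor (tm_prefix n) (set (smallA_tab ! n))"
      using isatt_sound[OF h(1)] h(4) w by simp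
    have card: "card (set (smallA_tab ! n)) = tv n" using h(2,3) by (simp add: distinct_card)
    have tv1: "1 \<le> tv n" unfolding tv_def by simp
    show "min_attractor_size (tm_prefix n) = tv n"
    proof (rule mas_char[OF att card])
      fix S assume A: "string_attractor (tm_prefix n) S"
      show "tv n \<le> card S"
      proof (rule ccontr)
        assume "\<not> tv n \<le> card S"
        then have cS: "card S \<le> tv n - 1" by simp
        have "\<forall>m\<in>set (map (covl ?w) (smallF_tab ! n)). \<exists>i\<in>set [] \<union> S. i \<in> set m"
          using h(6) att_hit[of ?w S] A w by (auto simp: list_all_iff)
        then show False using nohit_sound[OF h(5) att_finite[OF A] cS] by blast
      qed
    qed
  next
    case False
    then have tv4: "tv n = 4" unfolding tv_def by simp
    obtain S where S: "finite S" "card S = 4" "Inv S n" using Qp_all[of n] False unfolding Qp_def by auto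
    have att: "string_attractor (tm_prefix n) S" using Inv_att[OF S(3)] False by simp
    show "min_attractor_size (tm_prefix n) = tv n" unfolding tv4
    proof (rule mas_char[OF att S(2)])
      fix S' assume A: "string_attractor (tm_prefix n) S'"
      show "4 \<le> card S'"
      proof (rule ccontr)
        assume "\<not> 4 \<le> card S'"
        then show False using low_W[of n S'] att_W[OF A] att_finite[OF A] False by simp
      qed
    qed
  qed
qed

end
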